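(* Let $\mathcal{U}\subset\mathbb{R}^n\times\mathbb{R}^p$ be open, $\mathcal{D}\subset\mathcal{U}$ nonempty, $\Gamma:\mathcal{D}\times\mathbb{R}^m\rightrightarrows\mathbb{R}^q$ with $\Gamma(\xi,\cdot)$ positively homogeneous for all $\xi\in\mathcal{D}$, and let $\bar\xi\in\mathcal{D}$, $H:=\Gamma(\bar\xi,\cdot)$. Suppose $\Gamma$ is outer semicontinuous and that there are $s\le q$ and $\mathcal{T}:\mathbb{R}^m\rightrightarrows\mathbb{R}^{q-s}$ with $H(z)=\{0\}\times\mathcal{T}(z)$ for all $z\in\mathbb{R}^m$ (where $0\in\mathbb{R}^s$). If $\mathcal{T}(0)=\{0\}$ and $\mathcal{T}^{-1}(0)=\{0\}$, then the mapping $\mathcal{K}(\xi,z):=\mathrm{cone}(\Gamma(\xi,z))$ on $\mathcal{D}\times\mathbb{R}^m$ is outer semicontinuous relative to $\mathcal{D}\times\mathrm{bd}\,\mathbb{B}$ at $(\bar\xi,z)$ for every $z\in\mathrm{bd}\,\mathbb{B}\cap\mathrm{dom}\,H$.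
   Context: $\mathbb{B}$ closed unit ball, $\mathrm{bd}$ boundary, $\mathrm{cone}(Z):=\bigcup_{\gamma\ge0}\gamma Z$, $\mathcal{T}^{-1}(0):=\{z\mid 0\in\mathcal{T}(z)\}$. Positive homogeneity: $H(\gamma z)=\gamma H(z)$ for all $\gamma>0$. A map $M$ is outer semicontinuous at $x$ relative to $X$ if $\limsup_{x'\to x,\,x'\in X}M(x')\subset M(x)$ (Painlevé–Kuratowski); $\Gamma$ outer semicontinuous means this at every point of $\mathcal{D}\times\mathbb{R}^m$. *)

theory Defs
  imports "HOL-Analysis.Analysis"
begin

definition osc_rel :: "('a::topological_space \<Rightarrow> 'b::topological_space set) \<Rightarrow> 'a set \<Rightarrow> 'a \<Rightarrow> bool" where
  "osc_rel M X x \<longleftrightarrow>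
     (\<forall>xs ys y. (\<forall>k. xs k \<in> X) \<longrightarrow> xs \<longlonglongrightarrow> x \<longrightarrow>
        (\<forall>k. ys k \<in> M (xs k)) \<longrightarrow> ys \<longlonglongrightarrow> y \<longrightarrow> y \<in> M x)"

definition gen_cone :: "'a::real_vector set \<Rightarrow> 'a set" where
  "gen_cone Z = (\<Union>\<gamma>\<in>{0..}. (\<lambda>y. \<gamma> *\<^sub>R y) ` Z)"

definition pos_homogeneous :: "('a::real_vector \<Rightarrow> 'b::real_vector set) \<Rightarrow> bool" where
  "pos_homogeneous H \<longleftrightarrow> (\<forall>\<gamma>::real. \<forall>z. \<gamma> > 0 \<longrightarrow> H (\<gamma> *\<^sub>R z) = (\<lambda>y. \<gamma> *\<^sub>R y) ` H z)"

definition sv_dom :: "('a \<Rightarrow> 'b set) \<Rightarrow> 'a set" where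
  "sv_dom H = {z. H z \<noteq> {}}"

definition sv_inv_zero :: "('a \<Rightarrow> 'b::zero set) \<Rightarrow> 'a set" where
  "sv_inv_zero T = {z. 0 \<in> T z}"

end

theory Submission
  imports Defs
begin

theorem proposition3:
  fixes U D :: "((real^'n) \<times> (real^'p)) set"
    and \<Gamma> :: "(real^'n) \<times> (real^'p) \<Rightarrow> real^'m \<Rightarrow> ((real^'s) \<times> (real^'t)) set"
    and \<xi>bar :: "(real^'n) \<times> (real^'p)"
    and T :: "real^'m \<Rightarrow> (real^'t) set"
  assumes "open U" and "D \<subseteq> U" and "D \<noteq> {}"
    and "\<forall>\<xi>\<in>D. pos_homogeneous (\<Gamma> \<xi>)"
    and "\<xi>bar \<in> D"
    and "\<forall>w \<in> D \<times> UNIV. osc_rel (\<lambda>(\<xi>, z). \<Gamma> \<xi> z) (D \<times> UNIV) w"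
    and "\<forall>z. \<Gamma> \<xi>bar z = {0} \<times> T z"
    and "T 0 = {0}" and "sv_inv_zero T = {0}"
  shows "\<forall>z \<in> sphere 0 1 \<inter> sv_dom (\<Gamma> \<xi>bar).
           osc_rel (\<lambda>(\<xi>, z). gen_cone (\<Gamma> \<xi> z)) (D \<times> sphere 0 1) (\<xi>bar, z)"
proof (intro ballI)
  note hom = assms(4) and osc = assms(6) and H = assms(7) and T0 = assms(8) and Tinv = assms(9)
  fix z assume "z \<in> sphere 0 1 \<inter> sv_dom (\<Gamma> \<xi>bar)"
  then have nz: "norm z = 1" by simp
  show "osc_rel (\<lambda>(\<xi>, z). gen_cone (\<Gamma> \<xi> z)) (D \<times> sphere 0 1) (\<xi>bar, z)"
    unfolding osc_rel_def
  proof (intro allI impI)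
    fix xs :: "nat \<Rightarrow> ((real^'n) \<times> (real^'p)) \<times> (real^'m)" and ys y
    assume xsD: "\<forall>k. xs k \<in> D \<times> sphere 0 1" and xsl: "xs \<longlonglongrightarrow> (\<xi>bar, z)"
      and ysC: "\<forall>k. ys k \<in> (\<lambda>(\<xi>, z). gen_cone (\<Gamma> \<xi> z)) (xs k)" and ysl: "ys \<longlonglongrightarrow> y"
    have "\<forall>k. \<exists>g w. g \<ge> 0 \<and> w \<in> \<Gamma> (fst (xs k)) (snd (xs k)) \<and> ys k = g *\<^sub>R w"
    proof
      fix k
      from ysC have "ys k \<in> gen_cone (\<Gamma> (fst (xs k)) (snd (xs k)))"
        by (simp add: case_prod_beta)
      then show "\<exists>g w. g \<ge> 0 \<and> w \<in> \<Gamma> (fst (xs k)) (snd (xs k)) \<and> ys k = g *\<^sub>R w"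
        unfolding gen_cone_def by blast
    qed
    then obtain g w where g0: "\<And>k. g k \<ge> 0" and wG: "\<And>k. w k \<in> \<Gamma> (fst (xs k)) (snd (xs k))"
      and ysw: "\<And>k. ys k = g k *\<^sub>R w k" by metis
    define a where "a k = 1 / (1 + norm (w k))" for k
    define u where "u k = a k *\<^sub>R w k" for k
    have apos: "a k > 0" for k unfolding a_def by (simp add: add_pos_nonneg)
    have ale: "a k \<le> 1" for k unfolding a_def by (simp add: field_simps add_pos_nonneg)
    have nu: "norm (u k) = 1 - a k" for k
    proof -
      have p: "1 + norm (w k) > 0" by (simp add: add_pos_nonneg)
      have "norm (u k) = norm (w k) / (1 + norm (w k))" unfolding u_def a_def using p by simp
      also have "... = 1 - a k" unfolding a_def using p by (simp add: field_simps)
      finally show ?thesis .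
    qed
    have fD: "xs k \<in> D \<times> sphere 0 1" for k using xsD by blast
    have uG: "u k \<in> \<Gamma> (fst (xs k)) (a k *\<^sub>R snd (xs k))" for k
    proof -
      have "pos_homogeneous (\<Gamma> (fst (xs k)))" using hom fD[of k] by auto
      then have "\<Gamma> (fst (xs k)) (a k *\<^sub>R snd (xs k)) = (\<lambda>y. a k *\<^sub>R y) ` \<Gamma> (fst (xs k)) (snd (xs k))"
        unfolding pos_homogeneous_def using apos by blast
      then show ?thesis unfolding u_def using wG[of k] by auto
    qed
    have "compact (cball (0::(real^'s) \<times> (real^'t)) 1 \<times> {0..1::real})"
      by (intro compact_Times) auto
    then have sc: "seq_compact (cball (0::(real^'s) \<times> (real^'t)) 1 \<times> {0..1::real})"
      using compact_imp_seq_compact by blast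
    have inS: "\<forall>k. (u k, a k) \<in> cball 0 1 \<times> {0..1}"
      using nu apos ale by (simp add: less_imp_le)
    obtain l r where lS: "l \<in> cball (0::(real^'s) \<times> (real^'t)) 1 \<times> {0..1::real}"
      and r: "strict_mono r" and lim: "((\<lambda>k. (u k, a k)) \<circ> r) \<longlonglongrightarrow> l"
      using seq_compactE[OF sc inS] by blast
    obtain u0 a0 where l: "l = (u0, a0)" by (cases l) auto
    have ul: "(\<lambda>k. u (r k)) \<longlonglongrightarrow> u0" using tendsto_fst[OF lim] l by (simp add: o_def)
    have al: "(\<lambda>k. a (r k)) \<longlonglongrightarrow> a0" using tendsto_snd[OF lim] l by (simp add: o_def)
    have xsr: "(\<lambda>k. xs (r k)) \<longlonglongrightarrow> (\<xi>bar, z)" using LIMSEQ_subseq_LIMSEQ[OF xsl r] by (simp add: o_def)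
    have f1: "(\<lambda>k. fst (xs (r k))) \<longlonglongrightarrow> \<xi>bar" using tendsto_fst[OF xsr] by simp
    have s1: "(\<lambda>k. snd (xs (r k))) \<longlonglongrightarrow> z" using tendsto_snd[OF xsr] by simp
    have a0ge: "a0 \<ge> 0" using lS l by simp
    have oscb: "osc_rel (\<lambda>(\<xi>, z). \<Gamma> \<xi> z) (D \<times> UNIV) (\<xi>bar, z)" using osc assms(5) by blast
    have oscb0: "osc_rel (\<lambda>(\<xi>, z). \<Gamma> \<xi> z) (D \<times> UNIV) (\<xi>bar, 0)" using osc assms(5) by blast
    show "y \<in> (\<lambda>(\<xi>, z). gen_cone (\<Gamma> \<xi> z)) (\<xi>bar, z)"
    proof (cases "a0 = 0")
      case True
      have A1: "(\<lambda>k. (fst (xs (r k)), a (r k) *\<^sub>R snd (xs (r k)))) \<longlonglongrightarrow> (\<xi>bar, 0)"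
        using tendsto_Pair[OF f1 tendsto_scaleR[OF al s1]] True by simp
      have A2: "\<forall>k. (fst (xs (r k)), a (r k) *\<^sub>R snd (xs (r k))) \<in> D \<times> UNIV"
        using fD by (simp add: mem_Times_iff)
      have A3: "\<forall>k. u (r k) \<in> (\<lambda>(\<xi>, z). \<Gamma> \<xi> z) (fst (xs (r k)), a (r k) *\<^sub>R snd (xs (r k)))"
        using uG by simp
      have "u0 \<in> (\<lambda>(\<xi>, z). \<Gamma> \<xi> z) (\<xi>bar, 0)"
        by (rule oscb0[unfolded osc_rel_def, rule_format, OF A2[rule_format] A1 A3[rule_format] ul])
      then have "u0 \<in> \<Gamma> \<xi>bar 0" by simp
      then have "u0 = 0" using H T0 by (auto simp: zero_prod_def)
      moreover have "(\<lambda>k. norm (u (r k))) \<longlonglongrightarrow> norm u0" by (rule tendsto_norm[OF ul])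
      moreover have "(\<lambda>k. norm (u (r k))) \<longlonglongrightarrow> 1 - a0" unfolding nu by (intro tendsto_intros al)
      ultimately show ?thesis using True LIMSEQ_unique by fastforce
    next
      case False
      then have a0p: "a0 > 0" using a0ge by simp
      have wr: "w (r k) = inverse (a (r k)) *\<^sub>R u (r k)" for k
        unfolding u_def using apos[of "r k"] by simp
      define w0 where "w0 = inverse a0 *\<^sub>R u0"
      have wl: "(\<lambda>k. w (r k)) \<longlonglongrightarrow> w0"
        unfolding wr w0_def using a0p by (intro tendsto_intros al ul) auto
      have B2: "\<forall>k. xs (r k) \<in> D \<times> UNIV" using fD by (simp add: mem_Times_iff)
      have B3: "\<forall>k. w (r k) \<in> (\<lambda>(\<xi>, z). \<Gamma> \<xi> z) (xs (r k))"
        using wG by (simp add: case_prod_beta)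
      have "w0 \<in> (\<lambda>(\<xi>, z). \<Gamma> \<xi> z) (\<xi>bar, z)"
        by (rule oscb[unfolded osc_rel_def, rule_format, OF B2[rule_format] xsr B3[rule_format] wl])
      then have w0G: "w0 \<in> \<Gamma> \<xi>bar z" by simp
      have w0nz: "w0 \<noteq> 0"
      proof
        assume "w0 = 0"
        then have "0 \<in> T z" using w0G H by (auto simp: zero_prod_def)
        then have "z \<in> sv_inv_zero T" unfolding sv_inv_zero_def by simp
        then show False using Tinv nz by simp
      qed
      have ev: "eventually (\<lambda>k. w (r k) \<noteq> 0) sequentially"
        using tendsto_imp_eventually_ne[OF wl w0nz] .
      have gl0: "(\<lambda>k. norm (ys (r k)) / norm (w (r k))) \<longlonglongrightarrow> norm y / norm w0"
        using w0nz LIMSEQ_subseq_LIMSEQ[OF ysl r]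
        by (intro tendsto_intros wl) (auto simp: o_def)
      have gl: "(\<lambda>k. g (r k)) \<longlonglongrightarrow> norm y / norm w0"
      proof (rule Lim_transform_eventually[OF gl0])
        show "eventually (\<lambda>k. norm (ys (r k)) / norm (w (r k)) = g (r k)) sequentially"
          using ev by eventually_elim (simp add: ysw g0 abs_of_nonneg)
      qed
      have "(\<lambda>k. ys (r k)) \<longlonglongrightarrow> (norm y / norm w0) *\<^sub>R w0"
        unfolding ysw by (intro tendsto_intros gl wl)
      moreover have "(\<lambda>k. ys (r k)) \<longlonglongrightarrow> y" using LIMSEQ_subseq_LIMSEQ[OF ysl r] by (simp add: o_def)
      ultimately have "y = (norm y / norm w0) *\<^sub>R w0" using LIMSEQ_unique by blast
      then show ?thesis unfolding gen_cone_def using w0G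
        by (auto intro!: bexI[of _ "norm y / norm w0"] image_eqI[of _ _ w0])
    qed
  qed
qed

end
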